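(* For every prime power $q$ and all $k,r,\ell,m\in\mathbb{N}$ such that $k\leq r\leq\ell\leq q/2$, $m(k-1)<r$, and $m(\ell-1)<n:=q-r$, there exists an $[[n,\,k,\,\geq\ell+1-r]]_q$ quantum CSS code $Q$ (with a $Z$ encoding function on $\mathbb{F}_{q^k}$) that is $m$-multiplication-friendly.
   Context: $x*y$ is the componentwise product, $x\cdot y=\sum_ix_iy_i$, $V^\perp$ the dual. A quantum CSS code $\mathrm{CSS}(Q_X,Q_Z)$ of length $n$ over $\mathbb{F}_q$ is a pair of subspaces $Q_X,Q_Z\subseteq\mathbb{F}_q^n$ with $Q_X^\perp\subseteq Q_Z$, of dimension $k=\dim Q_Z-\dim Q_X^\perp$ and distance $\min\{|y|:y\in(Q_X\setminus Q_Z^\perp)\cup(Q_Z\setminus Q_X^\perp)\}$. A $Z$ encoding function is an $\mathbb{F}_q$-linear isomorphism $\mathrm{Enc}_Z:\mathbb{F}_{q^k}\to Q_Z/Q_X^\perp$ (viewing $\mathbb{F}_{q^k}$ as a $k$-dimensional $\mathbb{F}_q$-space). A code $Q=\mathrm{CSS}(Q_X,Q_Z;\mathrm{Enc}_Z)$ is $m$-multiplication-friendly if there is an $\mathbb{F}_q$-linear $\mathrm{Dec}_Z:\mathbb{F}_q^n\to\mathbb{F}_{q^k}$ such that for all $z_1,\dots,z_m\in\mathbb{F}_{q^k}$ and all $z_h'\in\mathrm{Enc}_Z(z_h)$, $z_1z_2\cdots z_m=\mathrm{Dec}_Z(z_1'*\cdots*z_m')$. *)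

theory Defs
  imports Complex_Main "HOL-Library.Function_Algebras" "HOL-Library.Cardinality"
begin

text \<open>Vectors of length n over a field are modelled as functions nat => 'a that
vanish at every index >= n (coordinates 0..n-1).\<close>

definition vecs :: "nat \<Rightarrow> (nat \<Rightarrow> 'a::field) set" where
  "vecs n = {v. \<forall>i\<ge>n. v i = 0}"

definition vscale :: "'a::field \<Rightarrow> (nat \<Rightarrow> 'a) \<Rightarrow> (nat \<Rightarrow> 'a)" where
  "vscale c v = (\<lambda>i. c * v i)"

definition is_subspace :: "nat \<Rightarrow> (nat \<Rightarrow> 'a::field) set \<Rightarrow> bool" where
  "is_subspace n V \<longleftrightarrow> V \<subseteq> vecs n \<and> 0 \<in> V \<and>
     (\<forall>x\<in>V. \<forall>y\<in>V. x + y \<in> V) \<and> (\<forall>c. \<forall>x\<in>V. vscale c x \<in> V)"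

definition sdim :: "(nat \<Rightarrow> 'a::field) set \<Rightarrow> nat" where
  "sdim V = vector_space.dim (vscale :: 'a \<Rightarrow> _) V"

definition dotp :: "nat \<Rightarrow> (nat \<Rightarrow> 'a::field) \<Rightarrow> (nat \<Rightarrow> 'a) \<Rightarrow> 'a" where
  "dotp n x y = (\<Sum>i<n. x i * y i)"

definition dual :: "nat \<Rightarrow> (nat \<Rightarrow> 'a::field) set \<Rightarrow> (nat \<Rightarrow> 'a) set" where
  "dual n V = {y \<in> vecs n. \<forall>x\<in>V. dotp n x y = 0}"

definition hweight :: "nat \<Rightarrow> (nat \<Rightarrow> 'a::zero) \<Rightarrow> nat" where
  "hweight n x = card {i. i < n \<and> x i \<noteq> 0}"

definition is_css :: "nat \<Rightarrow> (nat \<Rightarrow> 'a::field) set \<Rightarrow> (nat \<Rightarrow> 'a) set \<Rightarrow> bool" where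
  "is_css n QX QZ \<longleftrightarrow> is_subspace n QX \<and> is_subspace n QZ \<and> dual n QX \<subseteq> QZ"

definition css_dim :: "nat \<Rightarrow> (nat \<Rightarrow> 'a::field) set \<Rightarrow> (nat \<Rightarrow> 'a) set \<Rightarrow> nat" where
  "css_dim n QX QZ = sdim QZ - sdim (dual n QX)"

definition css_dist :: "nat \<Rightarrow> (nat \<Rightarrow> 'a::field) set \<Rightarrow> (nat \<Rightarrow> 'a) set \<Rightarrow> nat" where
  "css_dist n QX QZ = Min (hweight n ` ((QX - dual n QZ) \<union> (QZ - dual n QX)))"

definition coset :: "(nat \<Rightarrow> 'a::field) set \<Rightarrow> (nat \<Rightarrow> 'a) \<Rightarrow> (nat \<Rightarrow> 'a) set" where
  "coset W x = {x + w | w. w \<in> W}"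

definition quot :: "nat \<Rightarrow> (nat \<Rightarrow> 'a::field) set \<Rightarrow> (nat \<Rightarrow> 'a) set \<Rightarrow> (nat \<Rightarrow> 'a) set set" where
  "quot n QX QZ = coset (dual n QX) ` QZ"

text \<open>Z encoding function: an F_q-linear isomorphism F_{q^k} -> Q_Z/Q_X^perp.
  The field F_{q^k} is a type 'b with an embedding emb : F_q -> F_{q^k}, which makes it an
  F_q-vector space via (c, z) |-> emb c * z.  Quotient operations are the usual
  representative-wise ones.\<close>
definition is_enc_Z ::
  "('a::field \<Rightarrow> 'b::field) \<Rightarrow> nat \<Rightarrow> (nat \<Rightarrow> 'a) set \<Rightarrow> (nat \<Rightarrow> 'a) set \<Rightarrow> ('b \<Rightarrow> (nat \<Rightarrow> 'a) set) \<Rightarrow> bool" where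
  "is_enc_Z emb n QX QZ Enc \<longleftrightarrow>
     bij_betw Enc UNIV (quot n QX QZ) \<and>
     (\<forall>a b x y. x \<in> Enc a \<longrightarrow> y \<in> Enc b \<longrightarrow> x + y \<in> Enc (a + b)) \<and>
     (\<forall>c a x. x \<in> Enc a \<longrightarrow> vscale c x \<in> Enc (emb c * a))"

definition mult_friendly ::
  "('a::field \<Rightarrow> 'b::field) \<Rightarrow> nat \<Rightarrow> nat \<Rightarrow> ('b \<Rightarrow> (nat \<Rightarrow> 'a) set) \<Rightarrow> bool" where
  "mult_friendly emb n m Enc \<longleftrightarrow>
     (\<exists>Dec :: (nat \<Rightarrow> 'a) \<Rightarrow> 'b.
        (\<forall>x\<in>vecs n. \<forall>y\<in>vecs n. Dec (x + y) = Dec x + Dec y) \<and>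
        (\<forall>c. \<forall>x\<in>vecs n. Dec (vscale c x) = emb c * Dec x) \<and>
        (\<forall>(z :: nat \<Rightarrow> 'b) (z' :: nat \<Rightarrow> nat \<Rightarrow> 'a).
           (\<forall>h<m. z' h \<in> Enc (z h)) \<longrightarrow>
           (\<Prod>h<m. z h) = Dec (\<lambda>i. if i < n then (\<Prod>h<m. z' h i) else 0)))"

definition field_emb :: "('a::field \<Rightarrow> 'b::field) \<Rightarrow> bool" where
  "field_emb emb \<longleftrightarrow> emb 1 = 1 \<and> (\<forall>x y. emb (x + y) = emb x + emb y) \<and>
     (\<forall>x y. emb (x * y) = emb x * emb y)"

end

theory Submission
  imports Defs "HOL-Computational_Algebra.Polynomial" "HOL-Algebra.Multiplicative_Group"
begin


lemma sum_fun_apply: "(\<Sum>j\<in>A. (F j :: nat \<Rightarrow> 'a::comm_monoid_add)) i = (\<Sum>j\<in>A. F j i)"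
  by (induction A rule: infinite_finite_induct) auto

lemma vs_vscale: "vector_space (vscale :: 'a::field \<Rightarrow> (nat \<Rightarrow> 'a) \<Rightarrow> (nat \<Rightarrow> 'a))"
  by unfold_locales (auto simp: vscale_def fun_eq_iff algebra_simps)

interpretation vs: vector_space "vscale :: 'a::field \<Rightarrow> (nat \<Rightarrow> 'a) \<Rightarrow> (nat \<Rightarrow> 'a)"
  by (rule vs_vscale)

interpretation vsp: vector_space_pair "vscale :: 'a::field \<Rightarrow> (nat \<Rightarrow> 'a) \<Rightarrow> (nat \<Rightarrow> 'a)"
   "vscale :: 'a::field \<Rightarrow> (nat \<Rightarrow> 'a) \<Rightarrow> (nat \<Rightarrow> 'a)"
  by unfold_locales

lemma vscale_apply [simp]: "vscale c v i = c * v i"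
  by (simp add: vscale_def)

lemma is_subspace_vs: "is_subspace n V \<Longrightarrow> vs.subspace V"
  unfolding is_subspace_def vs.subspace_def by auto

lemma fiber_count:
  assumes "finite X" "finite Y" "f ` X \<subseteq> Y" "\<And>y. y \<in> Y \<Longrightarrow> card {x\<in>X. f x = y} = c"
  shows "card X = card Y * c"
proof -
  have X: "X = (\<Union>y\<in>Y. {x\<in>X. f x = y})" using assms(3) by auto
  have "card X = (\<Sum>y\<in>Y. card {x\<in>X. f x = y})"
    by (subst X, rule card_UN_disjoint) (use assms in auto)
  also have "\<dots> = card Y * c" using assms(4) by simp
  finally show ?thesis .
qed

lemma card_span:
  fixes B :: "(nat \<Rightarrow> 'a::{field,finite}) set"
  assumes fin: "finite B" and ind: "vs.independent B"
  shows "card (vs.span B) = CARD('a) ^ card B"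
proof -
  define g where "g = (\<lambda>u. \<Sum>v\<in>B. vscale (u v) v)"
  have sp: "vs.span B = g ` (PiE B (\<lambda>_. UNIV))"
  proof
    show "vs.span B \<subseteq> g ` (PiE B (\<lambda>_. UNIV))"
    proof
      fix x assume "x \<in> vs.span B"
      then obtain u where u: "x = g u" using vs.span_finite[OF fin] by (auto simp: g_def)
      have "g u = g (restrict u B)" unfolding g_def by (rule sum.cong) auto
      then show "x \<in> g ` (PiE B (\<lambda>_. UNIV))" using u by auto
    qed
  next
    show "g ` (PiE B (\<lambda>_. UNIV)) \<subseteq> vs.span B"
    proof
      fix x assume "x \<in> g ` (PiE B (\<lambda>_. UNIV))"
      then obtain u where "x = g u" by auto
      moreover have "g u \<in> vs.span B" unfolding g_def
        by (rule vs.span_sum, rule vs.span_scale, rule vs.span_base)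
      ultimately show "x \<in> vs.span B" by simp
    qed
  qed
  have inj: "inj_on g (PiE B (\<lambda>_. UNIV))"
  proof (rule inj_onI)
    fix u u' assume u: "u \<in> PiE B (\<lambda>_. UNIV)" and u': "u' \<in> PiE B (\<lambda>_. UNIV)" and eq: "g u = g u'"
    have "(\<Sum>v\<in>B. vscale (u v - u' v) v) = g u - g u'"
      unfolding g_def by (simp add: vs.scale_left_diff_distrib sum_subtractf)
    then have z: "(\<Sum>v\<in>B. vscale (u v - u' v) v) = 0" using eq by simp
    have "\<forall>v\<in>B. u v - u' v = 0"
      using vs.independentD[OF ind fin subset_refl z] by auto
    then show "u = u'" by (intro PiE_ext[OF u u']) auto
  qed
  have "card (vs.span B) = card (PiE B (\<lambda>_. UNIV :: 'a set))"
    using sp card_image[OF inj] by simp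
  also have "\<dots> = CARD('a) ^ card B" by (simp add: card_PiE fin)
  finally show ?thesis .
qed

lemma card_subspace:
  fixes V :: "(nat \<Rightarrow> 'a::{field,finite}) set"
  assumes "finite V" "vs.subspace V"
  shows "card V = CARD('a) ^ vs.dim V"
proof -
  obtain B where B: "B \<subseteq> V" "vs.independent B" "V \<subseteq> vs.span B" "card B = vs.dim V"
    by (rule vs.basis_exists)
  have "vs.span B = V" using B assms vs.span_subspace by blast
  moreover have "finite B" using B assms finite_subset by blast
  ultimately show ?thesis using card_span[of B] B by simp
qed

lemma vecs_bij: "bij_betw (\<lambda>v. restrict v {..<n}) (vecs n) (PiE {..<n} (\<lambda>_. UNIV :: 'a::field set))"
proof (rule bij_betwI')
  fix x y :: "nat \<Rightarrow> 'a" assume "x \<in> vecs n" "y \<in> vecs n"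
  then show "(restrict x {..<n} = restrict y {..<n}) = (x = y)"
    unfolding vecs_def by (auto simp: fun_eq_iff restrict_def) (metis not_less)
next
  fix x :: "nat \<Rightarrow> 'a" assume "x \<in> vecs n" then show "restrict x {..<n} \<in> PiE {..<n} (\<lambda>_. UNIV)" by auto
next
  fix y assume y: "y \<in> PiE {..<n} (\<lambda>_. UNIV :: 'a set)"
  show "\<exists>x\<in>vecs n. y = restrict x {..<n}"
    by (rule bexI[of _ "\<lambda>i. if i < n then y i else 0"])
       (use y in \<open>auto simp: vecs_def restrict_def fun_eq_iff PiE_def extensional_def\<close>)
qed

lemma card_vecs: "card (vecs n :: (nat \<Rightarrow> 'a::{field,finite}) set) = CARD('a) ^ n"
  using bij_betw_same_card[OF vecs_bij[of n]] by (simp add: card_PiE)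

lemma finite_vecs: "finite (vecs n :: (nat \<Rightarrow> 'a::{field,finite}) set)"
proof -
  have "finite (PiE {..<n} (\<lambda>_. UNIV::'a set))" by (rule finite_PiE) auto
  then show ?thesis by (rule bij_betw_finite[OF vecs_bij[of n], THEN iffD2])
qed

lemma dotp_comm: "dotp n x y = dotp n y x"
  by (simp add: dotp_def mult.commute)
lemma dotp_add1: "dotp n (x + x') y = dotp n x y + dotp n x' y"
  by (simp add: dotp_def algebra_simps sum.distrib)
lemma dotp_add2: "dotp n x (y + y') = dotp n x y + dotp n x y'"
  by (simp add: dotp_def algebra_simps sum.distrib)
lemma dotp_diff2: "dotp n x (y - y') = dotp n x y - dotp n x y'"
  by (simp add: dotp_def algebra_simps sum_subtractf)
lemma dotp_scale1: "dotp n (vscale c x) y = c * dotp n x y"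
  by (simp add: dotp_def algebra_simps sum_distrib_left)
lemma dotp_scale2: "dotp n x (vscale c y) = c * dotp n x y"
  by (simp add: dotp_def algebra_simps sum_distrib_left)
lemma dotp_zero1 [simp]: "dotp n 0 y = 0" by (simp add: dotp_def)
lemma dotp_zero2 [simp]: "dotp n x 0 = 0" by (simp add: dotp_def)

lemma dual_subspace: "is_subspace n (dual n X)"
  unfolding is_subspace_def dual_def vecs_def
  by (auto simp: dotp_add2 dotp_scale2)

lemma subset_dual_dual: "X \<subseteq> vecs n \<Longrightarrow> X \<subseteq> dual n (dual n X)"
  unfolding dual_def by (auto simp: dotp_comm)

lemma card_dual:
  fixes V :: "(nat \<Rightarrow> 'a::{field,finite}) set"
  assumes V: "is_subspace n V"
  shows "card V * card (dual n V) = CARD('a) ^ n"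
proof -
  have Vv: "V \<subseteq> vecs n" using V by (simp add: is_subspace_def)
  have finV: "finite V" using finite_subset[OF Vv finite_vecs] .
  have sV: "vs.subspace V" using is_subspace_vs[OF V] .
  obtain B where B: "B \<subseteq> V" "vs.independent B" "V \<subseteq> vs.span B" "card B = vs.dim V"
    by (rule vs.basis_exists)
  have spB: "vs.span B = V" using B sV vs.span_subspace by blast
  have finB: "finite B" using B finV finite_subset by blast
  have dualB: "dual n V = {y\<in>vecs n. \<forall>b\<in>B. dotp n b y = 0}"
  proof
    show "dual n V \<subseteq> {y\<in>vecs n. \<forall>b\<in>B. dotp n b y = 0}" using B unfolding dual_def by auto
  next
    show "{y\<in>vecs n. \<forall>b\<in>B. dotp n b y = 0} \<subseteq> dual n V"
    proof
      fix y assume y: "y \<in> {y\<in>vecs n. \<forall>b\<in>B. dotp n b y = 0}"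
      have "dotp n x y = 0" if "x \<in> vs.span B" for x
        using that
      proof (induction rule: vs.span_induct_alt)
        case base then show ?case by (simp add: dotp_def)
      next
        case (step c x z) then show ?case using y by (simp only: dotp_add1 dotp_scale1) auto
      qed
      then show "y \<in> dual n V" using y spB unfolding dual_def by auto
    qed
  qed
  define \<Phi> where "\<Phi> = (\<lambda>y. restrict (\<lambda>b. dotp n b y) B)"
  define ind where "ind = (\<lambda>i::nat. (\<lambda>j. if j = i then 1 else 0) :: nat \<Rightarrow> 'a)"
  have decomp: "x = (\<Sum>i<n. vscale (x i) (ind i))" if "x \<in> vecs n" for x
  proof
    fix j show "x j = (\<Sum>i<n. vscale (x i) (ind i)) j"
      using that by (cases "j < n") (auto simp: sum_fun_apply ind_def vecs_def if_distrib[of "\<lambda>t. _ * t"] sum.delta' cong: if_cong)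
  qed
  have surj: "\<exists>y\<in>vecs n. \<Phi> y = t" if t: "t \<in> PiE B (\<lambda>_. UNIV)" for t
  proof -
    obtain g where g: "Vector_Spaces.linear vscale vscale g" "\<forall>x\<in>B. g x = (\<lambda>_. t x)"
      using vsp.linear_independent_extend[OF B(2), of "\<lambda>x. (\<lambda>_. t x)"] by blast
    have mh: "module_hom vscale vscale g" using g(1) by (simp add: Vector_Spaces.linear_def)
    define y where "y = (\<lambda>i. if i < n then g (ind i) 0 else 0)"
    have "g x 0 = dotp n x y" if "x \<in> vecs n" for x
    proof -
      have "g x = (\<Sum>i<n. vscale (x i) (g (ind i)))"
        by (subst decomp[OF that]) (simp add: module_hom.sum[OF mh] module_hom.scale[OF mh])
      then show ?thesis by (simp add: sum_fun_apply dotp_def y_def)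
    qed
    then have "\<forall>b\<in>B. dotp n b y = t b" using g(2) B(1) Vv by force
    moreover have "y \<in> vecs n" by (simp add: y_def vecs_def)
    ultimately show ?thesis using t by (auto simp: \<Phi>_def PiE_def extensional_def restrict_def fun_eq_iff)
  qed
  have fib: "card {y\<in>vecs n. \<Phi> y = t} = card (dual n V)" if t: "t \<in> PiE B (\<lambda>_. UNIV)" for t
  proof -
    obtain y0 where y0: "y0 \<in> vecs n" "\<Phi> y0 = t" using surj[OF t] by blast
    have "{y\<in>vecs n. \<Phi> y = t} = (\<lambda>w. y0 + w) ` dual n V"
    proof
      show "{y\<in>vecs n. \<Phi> y = t} \<subseteq> (\<lambda>w. y0 + w) ` dual n V"
      proof
        fix y assume y: "y \<in> {y\<in>vecs n. \<Phi> y = t}"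
        have "y - y0 \<in> dual n V"
          unfolding dualB using y y0
          by (auto simp: vecs_def dotp_diff2 \<Phi>_def restrict_def fun_eq_iff) (metis)
        then show "y \<in> (\<lambda>w. y0 + w) ` dual n V" by (rule rev_image_eqI) simp
      qed
    next
      show "(\<lambda>w. y0 + w) ` dual n V \<subseteq> {y\<in>vecs n. \<Phi> y = t}"
      proof
        fix y assume "y \<in> (\<lambda>w. y0 + w) ` dual n V"
        then obtain w where w: "w \<in> dual n V" "y = y0 + w" by auto
        have "\<Phi> (y0 + w) = \<Phi> y0" using w(1) unfolding \<Phi>_def dualB
          by (auto simp: dotp_add2 restrict_def fun_eq_iff)
        moreover have "y0 + w \<in> vecs n" using w(1) y0(1) by (auto simp: dualB vecs_def)
        ultimately show "y \<in> {y\<in>vecs n. \<Phi> y = t}" using w(2) y0(2) by simp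
      qed
    qed
    then show ?thesis by (simp add: card_image)
  qed
  have "card (vecs n :: (nat \<Rightarrow> 'a) set) = card (PiE B (\<lambda>_. UNIV :: 'a set)) * card (dual n V)"
    by (rule fiber_count[OF finite_vecs _ _ fib]) (auto simp: finB finite_PiE \<Phi>_def)
  then show ?thesis using card_vecs[of n, where 'a='a] card_span[OF finB B(2)] spB
    by (simp add: card_PiE finB mult.commute)
qed

lemma dual_dual:
  fixes V :: "(nat \<Rightarrow> 'a::{field,finite}) set"
  assumes V: "is_subspace n V"
  shows "dual n (dual n V) = V"
proof -
  have Vv: "V \<subseteq> vecs n" using V by (simp add: is_subspace_def)
  have c1: "card V * card (dual n V) = CARD('a) ^ n" by (rule card_dual[OF V])
  have c2: "card (dual n V) * card (dual n (dual n V)) = CARD('a) ^ n" by (rule card_dual[OF dual_subspace])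
  have "0 \<in> dual n V" by (simp add: dual_def vecs_def)
  moreover have "finite (dual n V)" by (rule finite_subset[OF _ finite_vecs]) (auto simp: dual_def)
  ultimately have "card (dual n V) > 0" by (auto simp: card_gt_0_iff)
  then have "card (dual n (dual n V)) = card V" using c1 c2 by (metis mult.commute mult_left_cancel not_gr0)
  moreover have "finite (dual n (dual n V))" by (rule finite_subset[OF _ finite_vecs]) (auto simp: dual_def)
  ultimately show ?thesis using subset_dual_dual[OF Vv] by (metis card_subset_eq)
qed




section \<open>Embedding facts\<close>

lemma emb_0: "field_emb emb \<Longrightarrow> emb 0 = 0"
  unfolding field_emb_def by (metis add_cancel_right_right add_0)

lemma emb_1: "field_emb emb \<Longrightarrow> emb 1 = 1"
  unfolding field_emb_def by simp

lemma emb_add: "field_emb emb \<Longrightarrow> emb (x + y) = emb x + emb y"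
  unfolding field_emb_def by simp

lemma emb_mult: "field_emb emb \<Longrightarrow> emb (x * y) = emb x * emb y"
  unfolding field_emb_def by simp

lemma emb_uminus: "field_emb emb \<Longrightarrow> emb (- x) = - emb x"
  using emb_add[of emb x "-x"] emb_0[of emb] by (metis neg_eq_iff_add_eq_0 add.right_inverse)

lemma emb_diff: "field_emb emb \<Longrightarrow> emb (x - y) = emb x - emb y"
  using emb_add[of emb x "-y"] emb_uminus[of emb y] by simp

lemma emb_inj:
  fixes emb :: "'a::field \<Rightarrow> 'b::field"
  assumes e: "field_emb emb" and eq: "emb x = emb y" shows "x = y"
proof (rule ccontr)
  assume "x \<noteq> y"
  then have "(x - y) * inverse (x - y) = 1" by simp
  then have "emb (x - y) * emb (inverse (x - y)) = 1" using emb_mult[OF e] emb_1[OF e] by metis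
  moreover have "emb (x - y) = 0" using emb_diff[OF e] eq by simp
  ultimately show False by simp
qed

lemma map_poly_emb_add:
  "field_emb emb \<Longrightarrow> map_poly emb (p + q) = map_poly emb p + map_poly emb q"
  by (intro poly_eqI) (simp add: coeff_map_poly emb_0 emb_add)

lemma map_poly_emb_smult:
  "field_emb emb \<Longrightarrow> map_poly emb (Polynomial.smult c p) = Polynomial.smult (emb c) (map_poly emb p)"
  by (rule map_poly_smult) (auto simp: emb_0 emb_mult)

lemma map_poly_emb_mult:
  assumes e: "field_emb emb"
  shows "map_poly emb (p * q) = map_poly emb p * map_poly emb q"
proof (induction p)
  case 0 then show ?case by simp
next
  case (pCons a p)
  have "map_poly emb (pCons a p * q) = map_poly emb (Polynomial.smult a q + pCons 0 (p * q))" by simp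
  also have "\<dots> = Polynomial.smult (emb a) (map_poly emb q) + pCons 0 (map_poly emb p * map_poly emb q)"
    using pCons by (simp add: map_poly_emb_add[OF e] map_poly_emb_smult[OF e] map_poly_pCons emb_0[OF e])
  also have "\<dots> = map_poly emb (pCons a p) * map_poly emb q"
    by (simp add: map_poly_pCons emb_0[OF e])
  finally show ?case .
qed

section \<open>Generator of the multiplicative group\<close>

definition tring :: "'b::field ring" where
  "tring = \<lparr> carrier = UNIV, monoid.mult = (\<lambda>x y. x * y), one = 1, ring.zero = 0, add = (\<lambda>x y. x + y) \<rparr>"

lemma field_tring: "field (tring :: 'b::field ring)"
proof -
  have "\<exists>y. x + y = 0" for x :: 'b
    using add.right_inverse by blast
  moreover have "x \<noteq> 0 \<Longrightarrow> \<exists>y. x * y = 1" for x :: 'b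
    by (rule exI[of _ "inverse x"]) auto
  ultimately show ?thesis
    unfolding tring_def using add.right_inverse
    by (unfold_locales; auto simp:algebra_simps Units_def)
qed

lemma tring_pow: "a [^]\<^bsub>(tring :: 'b::field ring)\<^esub> (i::nat) = a ^ i"
  by (induction i) (simp_all add: tring_def)

lemma exists_generator: "\<exists>g::'b::{field,finite}. \<forall>x. x \<noteq> 0 \<longrightarrow> (\<exists>j::nat. x = g ^ j)"
proof -
  have "finite (carrier (tring :: 'b ring))" by simp
  from field.finite_field_mult_group_has_gen[OF field_tring this]
  obtain a :: 'b where a: "carrier (mult_of tring) = {a [^]\<^bsub>tring\<^esub> i |i. i \<in> (UNIV :: nat set)}"
    by blast
  show ?thesis
  proof (rule exI[of _ a], intro allI impI)
    fix x :: 'b assume "x \<noteq> 0"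
    then have "x \<in> carrier (mult_of tring)" by (simp add: tring_def)
    then show "\<exists>j. x = a ^ j" using a by (auto simp: tring_pow)
  qed
qed




definition Vd :: "('a::field \<Rightarrow> 'b::field) \<Rightarrow> 'b \<Rightarrow> nat \<Rightarrow> 'b set" where
  "Vd emb th d = range (\<lambda>c::nat\<Rightarrow>'a. \<Sum>i<d. emb (c i) * th ^ i)"

context
  fixes emb :: "'a::{field,finite} \<Rightarrow> 'b::{field,finite}" and th :: 'b
  assumes e: "field_emb emb"
begin

lemma Vd_I: "x = (\<Sum>i<d. emb (c i) * th ^ i) \<Longrightarrow> x \<in> Vd emb th d"
  unfolding Vd_def by blast

lemma Vd_0: "0 \<in> Vd emb th d"
  unfolding Vd_def by (rule range_eqI[of _ _ "\<lambda>_. 0"]) (simp add: emb_0[OF e])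

lemma Vd_add: "x \<in> Vd emb th d \<Longrightarrow> y \<in> Vd emb th d \<Longrightarrow> x + y \<in> Vd emb th d"
proof -
  assume "x \<in> Vd emb th d" "y \<in> Vd emb th d"
  then obtain c c' where "x = (\<Sum>i<d. emb (c i) * th ^ i)" "y = (\<Sum>i<d. emb (c' i) * th ^ i)"
    unfolding Vd_def by auto
  then have "x + y = (\<Sum>i<d. emb (c i + c' i) * th ^ i)"
    by (simp add: emb_add[OF e] sum.distrib distrib_right)
  then show ?thesis unfolding Vd_def by auto
qed

lemma Vd_diff: "x \<in> Vd emb th d \<Longrightarrow> y \<in> Vd emb th d \<Longrightarrow> x - y \<in> Vd emb th d"
proof -
  assume "x \<in> Vd emb th d" "y \<in> Vd emb th d"
  then obtain c c' where "x = (\<Sum>i<d. emb (c i) * th ^ i)" "y = (\<Sum>i<d. emb (c' i) * th ^ i)"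
    unfolding Vd_def by auto
  then have "x - y = (\<Sum>i<d. emb (c i - c' i) * th ^ i)"
    by (simp add: emb_diff[OF e] sum_subtractf left_diff_distrib)
  then show ?thesis unfolding Vd_def by auto
qed

lemma Vd_scale: "x \<in> Vd emb th d \<Longrightarrow> emb a * x \<in> Vd emb th d"
proof -
  assume "x \<in> Vd emb th d"
  then obtain c where "x = (\<Sum>i<d. emb (c i) * th ^ i)" unfolding Vd_def by auto
  then have "emb a * x = (\<Sum>i<d. emb (a * c i) * th ^ i)"
    by (simp add: emb_mult[OF e] sum_distrib_left mult.assoc)
  then show ?thesis unfolding Vd_def by auto
qed

lemma Vd_sum: "finite A \<Longrightarrow> (\<And>i. i \<in> A \<Longrightarrow> f i \<in> Vd emb th d) \<Longrightarrow> sum f A \<in> Vd emb th d"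
  by (induction A rule: finite_induct) (auto intro: Vd_0 Vd_add)

lemma Vd_pow: "j < d \<Longrightarrow> th ^ j \<in> Vd emb th d"
proof -
  assume j: "j < d"
  have t: "emb (if i = j then 1 else 0) * th ^ i = (if i = j then th ^ j else 0)" for i
    by (simp add: emb_0[OF e] emb_1[OF e])
  have "(\<Sum>i<d. emb (if i = j then 1 else 0) * th ^ i) = (\<Sum>i<d. if i = j then th ^ j else 0)"
    by (simp only: t)
  also have "\<dots> = th ^ j" using j by (simp add: sum.delta)
  finally show ?thesis by (intro Vd_I) (rule sym)
qed

lemma Vd_mono: "Vd emb th d \<subseteq> Vd emb th (Suc d)"
proof
  fix x assume "x \<in> Vd emb th d"
  then obtain c where x: "x = (\<Sum>i<d. emb (c i) * th ^ i)" unfolding Vd_def by auto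
  have "(\<Sum>i<d. emb ((c(d := 0)) i) * th ^ i) = (\<Sum>i<d. emb (c i) * th ^ i)"
    by (rule sum.cong) auto
  then have "(\<Sum>i<Suc d. emb ((c(d := 0)) i) * th ^ i) = x"
    unfolding x by (simp only: sum.lessThan_Suc) (simp add: emb_0[OF e])
  then show "x \<in> Vd emb th (Suc d)" by (intro Vd_I) (rule sym)
qed

lemma Vd_ext: "v \<in> Vd emb th d \<Longrightarrow> v + emb a * th ^ d \<in> Vd emb th (Suc d)"
proof -
  assume "v \<in> Vd emb th d"
  then obtain c where x: "v = (\<Sum>i<d. emb (c i) * th ^ i)" unfolding Vd_def by auto
  have "(\<Sum>i<d. emb ((c(d := a)) i) * th ^ i) = (\<Sum>i<d. emb (c i) * th ^ i)"
    by (rule sum.cong) auto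
  then have "(\<Sum>i<Suc d. emb ((c(d := a)) i) * th ^ i) = v + emb a * th ^ d"
    unfolding x by (simp only: sum.lessThan_Suc) simp
  then show ?thesis by (intro Vd_I) (rule sym)
qed

lemma Vd_zero_set: "Vd emb th 0 = {0}"
  unfolding Vd_def by auto

context
  assumes gen: "\<forall>x. x \<noteq> 0 \<longrightarrow> (\<exists>j::nat. x = th ^ j)"
begin

lemma Vd_closed:
  assumes h: "th ^ d \<in> Vd emb th d"
  shows "Vd emb th d = UNIV"
proof -
  have d: "d > 0"
  proof (rule ccontr)
    assume "\<not> d > 0" then have "d = 0" by simp
    then show False using h by (simp add: Vd_zero_set)
  qed
  have mul: "th * x \<in> Vd emb th d" if x: "x \<in> Vd emb th d" for x
  proof -
    obtain c where x: "x = (\<Sum>i<d. emb (c i) * th ^ i)" using x unfolding Vd_def by auto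
    have "th * x = (\<Sum>i<d. emb (c i) * th ^ Suc i)"
      unfolding x by (simp add: sum_distrib_left algebra_simps)
    also have "\<dots> \<in> Vd emb th d"
    proof (rule Vd_sum)
      fix i assume i: "i \<in> {..<d}"
      have "th ^ Suc i \<in> Vd emb th d"
      proof (cases "Suc i < d")
        case True then show ?thesis by (rule Vd_pow)
      next
        case False then have "Suc i = d" using i by auto
        then show ?thesis using h by simp
      qed
      then show "emb (c i) * th ^ Suc i \<in> Vd emb th d" by (rule Vd_scale)
    qed simp
    finally show ?thesis .
  qed
  have pows: "th ^ j \<in> Vd emb th d" for j
  proof (induction j)
    case 0 then show ?case using Vd_pow[OF d] by simp
  next
    case (Suc j) then show ?case using mul by simp
  qed
  have "x \<in> Vd emb th d" for x :: 'b
  proof (cases "x = 0")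
    case True then show ?thesis by (simp add: Vd_0)
  next
    case False then obtain j where "x = th ^ j" using gen by blast
    then show ?thesis using pows by simp
  qed
  then show ?thesis by blast
qed

lemma Vd_chain: "Vd emb th d = UNIV \<or> CARD('a) ^ d \<le> card (Vd emb th d)"
proof (induction d)
  case 0
  have "card (Vd emb th 0) = 1" by (simp add: Vd_zero_set)
  then show ?case by simp
next
  case (Suc d)
  show ?case
  proof (cases "Vd emb th d = UNIV")
    case True then show ?thesis using Vd_mono[of d] by auto
  next
    case False
    then have ge: "CARD('a) ^ d \<le> card (Vd emb th d)" using Suc by simp
    have nin: "th ^ d \<notin> Vd emb th d" using False Vd_closed by blast
    define h where "h = (\<lambda>(a, v). v + emb a * th ^ d)"
    have inj: "inj_on h (UNIV \<times> Vd emb th d)"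
    proof (rule inj_onI, clarify)
      fix a v a' v' assume v: "v \<in> Vd emb th d" and v': "v' \<in> Vd emb th d"
        and eq: "h (a, v) = h (a', v')"
      have eq': "v - v' = emb (a' - a) * th ^ d" using eq
        by (simp add: h_def emb_diff[OF e] algebra_simps)
      show "a = a' \<and> v = v'"
      proof (cases "a = a'")
        case True then show ?thesis using eq' by (simp add: emb_0[OF e])
      next
        case False
        have "emb (inverse (a' - a)) * (v - v') \<in> Vd emb th d"
          by (rule Vd_scale, rule Vd_diff[OF v v'])
        moreover have "emb (inverse (a' - a)) * (v - v') = th ^ d"
          unfolding eq' mult.assoc[symmetric] emb_mult[OF e, symmetric]
          using False by (simp add: emb_1[OF e])
        ultimately show ?thesis using nin by simp
      qed
    qed
    have sub: "h ` (UNIV \<times> Vd emb th d) \<subseteq> Vd emb th (Suc d)"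
      by (auto simp: h_def intro: Vd_ext)
    have "card (h ` (UNIV \<times> Vd emb th d)) = CARD('a) * card (Vd emb th d)"
      using card_image[OF inj] by (simp add: card_cartesian_product)
    then have A: "CARD('a) * card (Vd emb th d) \<le> card (Vd emb th (Suc d))"
      using card_mono[OF _ sub] by simp
    have B: "CARD('a) * CARD('a) ^ d \<le> CARD('a) * card (Vd emb th d)"
      using ge by (rule mult_le_mono2)
    have "CARD('a) ^ Suc d \<le> card (Vd emb th (Suc d))" using order_trans[OF B A] by simp
    then show ?thesis by blast
  qed
qed

lemma Vd_full:
  assumes "CARD('b) = CARD('a) ^ k"
  shows "Vd emb th k = UNIV"
proof -
  have "Vd emb th k = UNIV \<or> CARD('b) \<le> card (Vd emb th k)" using Vd_chain[of k] assms by simp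
  moreover have "card (Vd emb th k) \<le> CARD('b)" by (rule card_mono) auto
  ultimately have "Vd emb th k = UNIV \<or> card (Vd emb th k) = CARD('b)" by linarith
  moreover have "card (Vd emb th k) = CARD('b) \<Longrightarrow> Vd emb th k = UNIV"
    using card_subset_eq[of "UNIV::'b set" "Vd emb th k"] by simp
  ultimately show ?thesis by blast
qed

end
end



lemma map_poly_emb_diff:
  "field_emb emb \<Longrightarrow> map_poly emb (p - q) = map_poly emb p - map_poly emb q"
  by (intro poly_eqI) (simp add: coeff_map_poly emb_0 emb_diff)

lemma smult_sum_right: "Polynomial.smult c (\<Sum>i\<in>A. f i) = (\<Sum>i\<in>A. Polynomial.smult c (f i))"
  by (induction A rule: infinite_finite_induct) (auto simp: smult_add_right)

locale constr =
  fixes emb :: "'a::{field,finite} \<Rightarrow> 'b::{field,finite}" and th :: 'b and pts :: "nat \<Rightarrow> 'a"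
    and n l k :: nat
  assumes e: "field_emb emb"
    and surjV: "Vd emb th k = UNIV"
    and pinj: "inj_on pts {..<n}"
    and pth: "\<And>i. i < n \<Longrightarrow> emb (pts i) \<noteq> th"
    and kl: "k \<le> l" and ln: "l \<le> n" and k1: "1 \<le> k"
begin

definition psi :: "'a poly \<Rightarrow> 'b" where "psi p = poly (map_poly emb p) th"
definition ev :: "'a poly \<Rightarrow> nat \<Rightarrow> 'a" where "ev f = (\<lambda>i. if i < n then poly f (pts i) else 0)"
definition Acode where "Acode = {ev f | f. degree f < l}"
definition Bcode where "Bcode = {ev f | f. degree f < l \<and> psi f = 0}"
definition Enc where "Enc z = {ev f | f. degree f < l \<and> psi f = z}"

lemma psi_add: "psi (p + q) = psi p + psi q"
  by (simp add: psi_def map_poly_emb_add[OF e])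
lemma psi_diff: "psi (p - q) = psi p - psi q"
  by (simp add: psi_def map_poly_emb_diff[OF e])
lemma psi_mult: "psi (p * q) = psi p * psi q"
  by (simp add: psi_def map_poly_emb_mult[OF e])
lemma psi_smult: "psi (Polynomial.smult c p) = emb c * psi p"
  by (simp add: psi_def map_poly_emb_smult[OF e])
lemma psi_0 [simp]: "psi 0 = 0"
  by (simp add: psi_def)
lemma psi_1 [simp]: "psi 1 = 1"
  by (simp add: psi_def emb_1[OF e])
lemma psi_lin: "psi [:- a, 1:] = th - emb a"
  by (simp add: psi_def map_poly_pCons emb_0[OF e] emb_1[OF e] emb_uminus[OF e])
lemma psi_monom: "psi (Polynomial.monom c i) = emb c * th ^ i"
  by (simp add: psi_def map_poly_monom emb_0[OF e] poly_monom)
lemma psi_prod: "psi (\<Prod>i\<in>A. f i) = (\<Prod>i\<in>A. psi (f i))"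
  by (induction A rule: infinite_finite_induct) (auto simp: psi_mult)
lemma psi_sum: "psi (\<Sum>i\<in>A. f i) = (\<Sum>i\<in>A. psi (f i))"
  by (induction A rule: infinite_finite_induct) (auto simp: psi_add)

lemma degree_monom_sum: "degree (\<Sum>i<k. Polynomial.monom (c i) i) \<le> k - 1"
  by (rule degree_sum_le) (auto intro: order_trans[OF degree_monom_le])

lemma surj_poly: "\<exists>f. degree f < k \<and> psi f = z"
proof -
  have "z \<in> Vd emb th k" using surjV by simp
  then obtain c where z: "z = (\<Sum>i<k. emb (c i) * th ^ i)" unfolding Vd_def by auto
  define f where "f = (\<Sum>i<k. Polynomial.monom (c i) i)"
  have "degree f < k" unfolding f_def using degree_monom_sum[of c] k1 by linarith
  moreover have "psi f = z" unfolding f_def z psi_sum psi_monom ..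
  ultimately show ?thesis by blast
qed

lemma ev_add: "ev (f + g) = ev f + ev g"
  by (auto simp: ev_def fun_eq_iff)
lemma ev_diff: "ev (f - g) = ev f - ev g"
  by (auto simp: ev_def fun_eq_iff)
lemma ev_smult: "ev (Polynomial.smult c f) = vscale c (ev f)"
  by (auto simp: ev_def fun_eq_iff)
lemma ev_0 [simp]: "ev 0 = 0"
  by (auto simp: ev_def fun_eq_iff)
lemma ev_vecs: "ev f \<in> vecs n"
  by (auto simp: ev_def vecs_def)

lemma card_pts: "card (pts ` {..<n}) = n"
  using card_image[OF pinj] by simp

lemma ev_inj:
  assumes "degree f < n" "degree g < n" "ev f = ev g" shows "f = g"
proof (rule poly_eqI_degree[of "pts ` {..<n}"])
  fix x assume "x \<in> pts ` {..<n}"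
  then obtain i where "i < n" "x = pts i" by auto
  then show "poly f x = poly g x" using fun_cong[OF assms(3), of i] by (simp add: ev_def)
qed (use assms card_pts in auto)

lemma Enc_coset: assumes x: "x \<in> Enc z" shows "Enc z = coset Bcode x"
proof -
  obtain f where f: "x = ev f" "degree f < l" "psi f = z" using x unfolding Enc_def by auto
  show ?thesis
  proof
    show "Enc z \<subseteq> coset Bcode x"
    proof
      fix y assume "y \<in> Enc z"
      then obtain g where g: "y = ev g" "degree g < l" "psi g = z" unfolding Enc_def by auto
      have "ev (g - f) \<in> Bcode" unfolding Bcode_def using f g
        by (auto simp: psi_diff intro!: exI[of _ "g - f"] le_less_trans[OF degree_diff_le_max])
      moreover have "y = x + ev (g - f)" using f g by (simp add: ev_diff)
      ultimately show "y \<in> coset Bcode x" unfolding coset_def by blast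
    qed
  next
    show "coset Bcode x \<subseteq> Enc z"
    proof
      fix y assume "y \<in> coset Bcode x"
      then obtain w where w: "y = x + w" "w \<in> Bcode" unfolding coset_def by auto
      then obtain g where g: "w = ev g" "degree g < l" "psi g = 0" unfolding Bcode_def by auto
      have "y = ev (f + g)" using w g f by (simp add: ev_add)
      moreover have "degree (f + g) < l" using f g by (auto intro: le_less_trans[OF degree_add_le_max])
      moreover have "psi (f + g) = z" using f g by (simp add: psi_add)
      ultimately show "y \<in> Enc z" unfolding Enc_def by blast
    qed
  qed
qed

lemma Enc_ne: "\<exists>x. x \<in> Enc z"
proof -
  obtain f where "degree f < k" "psi f = z" using surj_poly by blast
  then have "ev f \<in> Enc z" unfolding Enc_def using kl by (intro CollectI exI[of _ f]) auto
  then show ?thesis by blast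
qed

lemma Enc_disj: assumes "x \<in> Enc z" "x \<in> Enc z'" shows "z = z'"
proof -
  obtain f where f: "x = ev f" "degree f < l" "psi f = z" using assms(1) unfolding Enc_def by auto
  obtain g where g: "x = ev g" "degree g < l" "psi g = z'" using assms(2) unfolding Enc_def by auto
  have "f = g" using f g ln by (intro ev_inj) auto
  then show ?thesis using f g by simp
qed

lemma Bcode_Enc: "Bcode = Enc 0"
  unfolding Bcode_def Enc_def by simp

lemma Acode_Un: "Acode = (\<Union>z. Enc z)"
  unfolding Acode_def Enc_def by auto

lemma Acode_vecs: "Acode \<subseteq> vecs n"
  unfolding Acode_def using ev_vecs by auto

lemma Bcode_sub: "Bcode \<subseteq> Acode"
  unfolding Acode_def Bcode_def by auto

lemma finite_Acode: "finite Acode"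
  using finite_subset[OF Acode_vecs finite_vecs] .

lemma finite_Bcode: "finite Bcode"
  using finite_subset[OF Bcode_sub finite_Acode] .

lemma Acode_subspace: "is_subspace n Acode"
  unfolding is_subspace_def
proof (intro conjI ballI allI)
  show "Acode \<subseteq> vecs n" by (rule Acode_vecs)
  show "0 \<in> Acode" unfolding Acode_def using ln kl k1 by (auto intro!: exI[of _ 0])
next
  fix x y assume "x \<in> Acode" "y \<in> Acode"
  then obtain f g where "x = ev f" "degree f < l" "y = ev g" "degree g < l" unfolding Acode_def by auto
  then show "x + y \<in> Acode" unfolding Acode_def
    by (auto simp: ev_add intro!: exI[of _ "f + g"] le_less_trans[OF degree_add_le_max])
next
  fix c x assume "x \<in> Acode"
  then obtain f where "x = ev f" "degree f < l" unfolding Acode_def by auto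
  then show "vscale c x \<in> Acode" unfolding Acode_def
    by (auto simp: ev_smult intro!: exI[of _ "Polynomial.smult c f"] le_less_trans[OF degree_smult_le])
qed

lemma Bcode_subspace: "is_subspace n Bcode"
  unfolding is_subspace_def
proof (intro conjI ballI allI)
  show "Bcode \<subseteq> vecs n" using Bcode_sub Acode_vecs by blast
  show "0 \<in> Bcode" unfolding Bcode_def using ln kl k1 by (auto intro!: exI[of _ 0])
next
  fix x y assume "x \<in> Bcode" "y \<in> Bcode"
  then obtain f g where "x = ev f" "degree f < l" "psi f = 0" "y = ev g" "degree g < l" "psi g = 0"
    unfolding Bcode_def by auto
  then show "x + y \<in> Bcode" unfolding Bcode_def
    by (auto simp: ev_add psi_add intro!: exI[of _ "f + g"] le_less_trans[OF degree_add_le_max])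
next
  fix c x assume "x \<in> Bcode"
  then obtain f where "x = ev f" "degree f < l" "psi f = 0" unfolding Bcode_def by auto
  then show "vscale c x \<in> Bcode" unfolding Bcode_def
    by (auto simp: ev_smult psi_smult intro!: exI[of _ "Polynomial.smult c f"] le_less_trans[OF degree_smult_le])
qed

lemma card_Enc: "card (Enc z) = card Bcode"
proof -
  obtain x where x: "x \<in> Enc z" using Enc_ne by blast
  have "Enc z = (\<lambda>w. x + w) ` Bcode" unfolding Enc_coset[OF x] coset_def by auto
  then show ?thesis by (simp add: card_image)
qed

lemma card_Acode: "card Acode = CARD('b) * card Bcode"
proof -
  have "card Acode = (\<Sum>z\<in>(UNIV::'b set). card (Enc z))"
    unfolding Acode_Un
  proof (rule card_UN_disjoint)
    show "\<forall>i\<in>UNIV. finite (Enc i)" using finite_subset[OF _ finite_Acode] Acode_Un by blast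
    show "\<forall>i\<in>UNIV. \<forall>j\<in>UNIV. i \<noteq> j \<longrightarrow> Enc i \<inter> Enc j = {}" using Enc_disj by blast
  qed simp
  then show ?thesis by (simp add: card_Enc)
qed

end



context constr begin

lemma exists_kernel: "\<exists>p. p \<noteq> 0 \<and> psi p = 0 \<and> degree p \<le> k"
proof -
  have "th ^ k \<in> Vd emb th k" using surjV by simp
  then obtain c where c: "th ^ k = (\<Sum>i<k. emb (c i) * th ^ i)" unfolding Vd_def by auto
  define p where "p = Polynomial.monom 1 k - (\<Sum>i<k. Polynomial.monom (c i) i)"
  have "psi p = 0" unfolding p_def psi_diff psi_sum psi_monom using c by (simp add: emb_1[OF e])
  moreover have "Polynomial.coeff p k = 1" unfolding p_def by (simp add: coeff_sum)
  then have "p \<noteq> 0" by auto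
  moreover have "degree p \<le> k" unfolding p_def
    by (rule degree_diff_le) (use degree_monom_sum[of c] degree_monom_le[of "1::'a" k] in auto)
  ultimately show ?thesis by blast
qed

lemma m0_ex: "\<exists>p. p \<noteq> 0 \<and> psi p = 0 \<and> degree p \<le> k \<and> (\<forall>q. q \<noteq> 0 \<and> psi q = 0 \<longrightarrow> degree p \<le> degree q)"
proof -
  define P where "P d \<longleftrightarrow> (\<exists>p. p \<noteq> 0 \<and> psi p = 0 \<and> degree p = d)" for d
  obtain p0 where p0: "p0 \<noteq> 0" "psi p0 = 0" "degree p0 \<le> k" using exists_kernel by blast
  have P0: "P (degree p0)" using p0 unfolding P_def by blast
  then have "P (Least P)" by (rule LeastI)
  then obtain p where p: "p \<noteq> 0" "psi p = 0" "degree p = Least P" unfolding P_def by blast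
  have "Least P \<le> degree p0" using P0 by (rule Least_le)
  moreover have "\<forall>q. q \<noteq> 0 \<and> psi q = 0 \<longrightarrow> Least P \<le> degree q" unfolding P_def by (auto intro: Least_le)
  ultimately show ?thesis using p p0 by (intro exI[of _ p]) auto
qed

definition m0 where
  "m0 = (SOME p. p \<noteq> 0 \<and> psi p = 0 \<and> degree p \<le> k \<and> (\<forall>q. q \<noteq> 0 \<and> psi q = 0 \<longrightarrow> degree p \<le> degree q))"

lemma m0_props: "m0 \<noteq> 0" "psi m0 = 0" "degree m0 \<le> k" "\<And>q. q \<noteq> 0 \<Longrightarrow> psi q = 0 \<Longrightarrow> degree m0 \<le> degree q"
  using someI_ex[OF m0_ex] unfolding m0_def[symmetric] by auto

lemma poly_lin: "poly [:- a, 1:] x = x - (a :: 'c::comm_ring_1)"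
  by (simp add: algebra_simps)

lemma m0_nonroot: assumes "i < n" shows "poly m0 (pts i) \<noteq> 0"
proof
  assume "poly m0 (pts i) = 0"
  then have "[:- pts i, 1:] dvd m0" by (simp add: poly_eq_0_iff_dvd)
  then obtain q where q: "m0 = [:- pts i, 1:] * q" by (auto elim: dvdE)
  have qn: "q \<noteq> 0" using q m0_props(1) by auto
  have "psi m0 = psi ([:- pts i, 1:] * q)" using q by (simp only:)
  then have "psi m0 = (th - emb (pts i)) * psi q" by (simp only: psi_mult psi_lin)
  then have "psi q = 0" using m0_props(2) pth[OF assms] by simp
  then have "degree m0 \<le> degree q" using m0_props(4) qn by blast
  moreover have "degree ([:- pts i, 1:] * q) = degree [:- pts i, 1:] + degree q"
    by (rule degree_mult_eq) (use qn in auto)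
  then have "degree m0 = Suc (degree q)" using q by simp
  ultimately show False by simp
qed

lemma weight_A: assumes "f \<noteq> 0" "degree f < l" shows "n + 1 \<le> hweight n (ev f) + l"
proof -
  define N where "N = {i. i < n \<and> poly f (pts i) \<noteq> 0}"
  define R where "R = {i. i < n \<and> poly f (pts i) = 0}"
  have hw: "hweight n (ev f) = card N" unfolding hweight_def N_def ev_def
    by (rule arg_cong[where f=card]) auto
  have "card R = card (pts ` R)"
    by (rule card_image[symmetric]) (rule inj_on_subset[OF pinj], auto simp: R_def)
  also have "\<dots> \<le> card {x. poly f x = 0}"
    by (rule card_mono) (auto simp: R_def poly_roots_finite assms(1))
  also have "\<dots> \<le> degree f" by (rule card_poly_roots_bound[OF assms(1)])
  finally have cR: "card R \<le> degree f" .
  have U: "{..<n} = N \<union> R" and D: "N \<inter> R = {}" unfolding N_def R_def by auto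
  have "finite N" "finite R" unfolding N_def R_def by auto
  then have "card (N \<union> R) = card N + card R" using D by (rule card_Un_disjoint)
  then have "n = card N + card R" using U by (metis card_lessThan)
  then show ?thesis using hw cR assms(2) by linarith
qed

lemma weight_dual: assumes y: "y \<in> dual n Bcode" "y \<noteq> 0" shows "l + 1 \<le> hweight n y + k"
proof (rule ccontr)
  assume neg: "\<not> ?thesis"
  define S where "S = {i. i < n \<and> y i \<noteq> 0}"
  have hw: "hweight n y = card S" unfolding S_def hweight_def ..
  have yv: "y \<in> vecs n" using y(1) unfolding dual_def by auto
  obtain j where j: "y j \<noteq> 0" using y(2) by (auto simp: fun_eq_iff)
  then have "j < n" using yv unfolding vecs_def by (cases "j < n") auto
  then have i0: "j \<in> S" using j unfolding S_def by auto
  have finS: "finite S" unfolding S_def by auto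
  have cS: "1 \<le> card S" using i0 finS by (metis One_nat_def Suc_leI card_gt_0_iff empty_iff)
  define f where "f = m0 * (\<Prod>i\<in>S - {j}. [:- pts i, 1:])"
  have "degree (\<Prod>i\<in>S - {j}. [:- pts i, 1:]) \<le> sum (degree \<circ> (\<lambda>i. [:- pts i, 1:])) (S - {j})"
    using finS by (intro degree_prod_sum_le) auto
  also have "\<dots> = card (S - {j})" by (simp add: o_def)
  also have "\<dots> = card S - 1" using i0 finS by simp
  finally have dP: "degree (\<Prod>i\<in>S - {j}. [:- pts i, 1:]) \<le> card S - 1" .
  have "degree f \<le> degree m0 + degree (\<Prod>i\<in>S - {j}. [:- pts i, 1:])"
    unfolding f_def by (rule degree_mult_le)
  then have df: "degree f < l" using dP m0_props(3) neg hw cS by linarith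
  have "psi f = 0" unfolding f_def by (simp add: psi_mult m0_props(2))
  then have "ev f \<in> Bcode" unfolding Bcode_def using df by blast
  then have d0: "dotp n (ev f) y = 0" using y(1) unfolding dual_def by auto
  have zero: "poly f (pts i) * y i = 0" if "i \<in> {..<n} - {j}" for i
  proof (cases "y i = 0")
    case False
    then have "i \<in> S - {j}" using that unfolding S_def by auto
    then have "(\<Prod>i'\<in>S - {j}. poly [:- pts i', 1:] (pts i)) = 0"
      using finS by (auto simp: prod_zero_iff intro!: bexI[of _ i])
    then show ?thesis unfolding f_def by (simp add: poly_prod)
  qed simp
  have "dotp n (ev f) y = (\<Sum>i<n. poly f (pts i) * y i)" by (simp add: dotp_def ev_def)
  also have "\<dots> = poly f (pts j) * y j + (\<Sum>i\<in>{..<n} - {j}. poly f (pts i) * y i)"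
    using \<open>j < n\<close> by (simp add: sum.remove)
  also have "(\<Sum>i\<in>{..<n} - {j}. poly f (pts i) * y i) = 0"
    by (rule sum.neutral) (use zero in blast)
  then have "poly f (pts j) * y j + (\<Sum>i\<in>{..<n} - {j}. poly f (pts i) * y i) = poly f (pts j) * y j" by simp
  finally have "poly f (pts j) * y j = 0" using d0 by simp
  moreover have "poly f (pts j) \<noteq> 0"
  proof -
    have "(\<Prod>i\<in>S - {j}. poly [:- pts i, 1:] (pts j)) \<noteq> 0"
    proof
      assume "(\<Prod>i\<in>S - {j}. poly [:- pts i, 1:] (pts j)) = 0"
      then obtain i where i: "i \<in> S - {j}" "pts j = pts i" using finS by (auto simp: prod_zero_iff)
      then have "i = j" using pinj \<open>j < n\<close> unfolding S_def inj_on_def by auto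
      then show False using i by simp
    qed
    then show ?thesis unfolding f_def using m0_nonroot[OF \<open>j < n\<close>] by (simp add: poly_prod)
  qed
  ultimately show False using j by simp
qed

definition Lg where
  "Lg i = Polynomial.smult (inverse (\<Prod>j\<in>{..<n}-{i}. (pts i - pts j))) (\<Prod>j\<in>{..<n}-{i}. [:- pts j, 1:])"
definition interp where "interp x = (\<Sum>i<n. Polynomial.smult (x i) (Lg i))"
definition Dec where "Dec x = psi (interp x)"

lemma Lg_eval: assumes "i < n" "j < n" shows "poly (Lg i) (pts j) = (if i = j then 1 else 0)"
proof -
  have pe: "poly (Lg i) (pts j) = inverse (\<Prod>j'\<in>{..<n}-{i}. (pts i - pts j')) * (\<Prod>j'\<in>{..<n}-{i}. (pts j - pts j'))"
    by (simp only: Lg_def poly_smult poly_prod poly_lin)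
  show ?thesis
  proof (cases "i = j")
    case True
    have "(\<Prod>j'\<in>{..<n}-{i}. (pts i - pts j')) \<noteq> 0"
    proof
      assume "(\<Prod>j'\<in>{..<n}-{i}. (pts i - pts j')) = 0"
      then obtain j' where "j' \<in> {..<n}-{i}" "pts i = pts j'" by (auto simp: prod_zero_iff)
      then show False using pinj assms unfolding inj_on_def by auto
    qed
    then show ?thesis using pe True by simp
  next
    case False
    then have "(\<Prod>j'\<in>{..<n}-{i}. (pts j - pts j')) = 0" using assms
      by (auto simp: prod_zero_iff intro!: bexI[of _ j])
    then show ?thesis using pe False by simp
  qed
qed

lemma degree_Lg: assumes "i < n" shows "degree (Lg i) \<le> n - 1"
proof -
  have "degree (\<Prod>j\<in>{..<n}-{i}. [:- pts j, 1:]) \<le> sum (degree \<circ> (\<lambda>j. [:- pts j, 1:])) ({..<n}-{i})"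
    by (intro degree_prod_sum_le) auto
  also have "\<dots> = card ({..<n}-{i})" by (simp add: o_def)
  also have "\<dots> = n - 1" using assms by simp
  finally show ?thesis unfolding Lg_def by (rule order_trans[OF degree_smult_le])
qed

lemma degree_interp: "degree (interp x) \<le> n - 1"
  unfolding interp_def
proof (rule degree_sum_le)
  fix i assume "i \<in> {..<n}"
  then show "degree (Polynomial.smult (x i) (Lg i)) \<le> n - 1"
    by (intro order_trans[OF degree_smult_le degree_Lg]) simp
qed simp

lemma poly_interp: assumes "j < n" shows "poly (interp x) (pts j) = x j"
proof -
  have "poly (interp x) (pts j) = (\<Sum>i<n. x i * (if i = j then 1 else 0))"
    unfolding interp_def poly_sum poly_smult using assms by (intro sum.cong) (auto simp: Lg_eval)
  also have "\<dots> = x j" using assms by (simp add: if_distrib[of "\<lambda>t. _ * t"] cong: if_cong)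
  finally show ?thesis .
qed

lemma n_pos: "0 < n" using k1 kl ln by linarith

lemma interp_ev: assumes "degree F < n" shows "interp (ev F) = F"
proof (rule poly_eqI_degree[of "pts ` {..<n}"])
  fix x assume "x \<in> pts ` {..<n}"
  then obtain i where "i < n" "x = pts i" by auto
  then show "poly (interp (ev F)) x = poly F x" by (simp add: poly_interp ev_def)
next
  show "degree (interp (ev F)) < card (pts ` {..<n})"
    using degree_interp[of "ev F"] card_pts n_pos by linarith
qed (use assms card_pts in auto)

lemma interp_add: "interp (x + y) = interp x + interp y"
  unfolding interp_def by (simp add: smult_add_left sum.distrib)

lemma interp_scale: "interp (vscale c x) = Polynomial.smult c (interp x)"
  unfolding interp_def smult_sum_right by (simp add: vscale_def)

end



context constr begin

lemma ddB: "dual n (dual n Bcode) = Bcode"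
  by (rule dual_dual[OF Bcode_subspace])

lemma css_ok: "is_css n (dual n Bcode) Acode"
  unfolding is_css_def ddB using dual_subspace Acode_subspace Bcode_sub by blast

lemma card_gt1: "1 < CARD('a)"
proof -
  have "card {0::'a, 1} \<le> CARD('a)" by (rule card_mono) auto
  then show ?thesis by simp
qed

lemma dim_ok:
  assumes cb: "CARD('b) = CARD('a) ^ k"
  shows "css_dim n (dual n Bcode) Acode = k"
proof -
  have cA: "card Acode = CARD('a) ^ sdim Acode"
    unfolding sdim_def by (rule card_subspace[OF finite_Acode is_subspace_vs[OF Acode_subspace]])
  have cB: "card Bcode = CARD('a) ^ sdim Bcode"
    unfolding sdim_def by (rule card_subspace[OF finite_Bcode is_subspace_vs[OF Bcode_subspace]])
  have "CARD('a) ^ sdim Acode = CARD('a) ^ (k + sdim Bcode)"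
    using card_Acode cA cB cb by (simp add: power_add)
  then have "sdim Acode = k + sdim Bcode" using card_gt1 by (simp add: power_inject_exp)
  then show ?thesis unfolding css_dim_def ddB by simp
qed

lemma dist_ok:
  assumes d1: "d \<le> n + 1 - l" and d2: "d \<le> l + 1 - k"
  shows "d \<le> css_dist n (dual n Bcode) Acode"
proof -
  define W where "W = (dual n Bcode - dual n Acode) \<union> (Acode - Bcode)"
  have "W \<subseteq> vecs n" unfolding W_def dual_def using Acode_vecs by auto
  then have fW: "finite W" using finite_subset[OF _ finite_vecs] by blast
  obtain x where x: "x \<in> Enc 1" using Enc_ne by blast
  have "x \<in> Acode" using x Acode_Un by blast
  moreover have "x \<notin> Bcode" using x Enc_disj unfolding Bcode_Enc by fastforce
  ultimately have neW: "W \<noteq> {}" unfolding W_def by blast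
  have all: "d \<le> hweight n w" if w: "w \<in> W" for w
  proof (cases "w \<in> Acode - Bcode")
    case True
    then obtain f where f: "w = ev f" "degree f < l" unfolding Acode_def by auto
    have "f \<noteq> 0" using True f Bcode_subspace unfolding is_subspace_def by auto
    then have "n + 1 \<le> hweight n w + l" using weight_A[OF _ f(2)] f(1) by simp
    then show ?thesis using d1 by linarith
  next
    case False
    then have w1: "w \<in> dual n Bcode" "w \<notin> dual n Acode" using w unfolding W_def by auto
    have "0 \<in> dual n Acode" by (simp add: dual_def vecs_def)
    then have "w \<noteq> 0" using w1 by auto
    then show ?thesis using weight_dual[OF w1(1)] d2 by linarith
  qed
  have "d \<le> Min (hweight n ` W)"
    using fW neW all by (simp add: Min_ge_iff)
  then show ?thesis unfolding css_dist_def ddB W_def .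
qed

lemma enc_ok: "is_enc_Z emb n (dual n Bcode) Acode Enc"
  unfolding is_enc_Z_def quot_def ddB
proof (intro conjI allI impI)
  show "bij_betw Enc UNIV (coset Bcode ` Acode)"
    unfolding bij_betw_def
  proof
    show "inj Enc"
    proof (rule injI)
      fix z z' assume eq: "Enc z = Enc z'"
      obtain x where "x \<in> Enc z" using Enc_ne by blast
      then show "z = z'" using eq Enc_disj by auto
    qed
    show "range Enc = coset Bcode ` Acode"
    proof
      show "range Enc \<subseteq> coset Bcode ` Acode"
      proof
        fix s assume "s \<in> range Enc"
        then obtain z where s: "s = Enc z" by auto
        obtain x where x: "x \<in> Enc z" using Enc_ne by blast
        have "x \<in> Acode" using x Acode_Un by blast
        then show "s \<in> coset Bcode ` Acode" using Enc_coset[OF x] s by blast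
      qed
      show "coset Bcode ` Acode \<subseteq> range Enc"
      proof
        fix s assume "s \<in> coset Bcode ` Acode"
        then obtain x where x: "x \<in> Acode" "s = coset Bcode x" by auto
        then obtain z where "x \<in> Enc z" using Acode_Un by blast
        then show "s \<in> range Enc" using Enc_coset x(2) by auto
      qed
    qed
  qed
next
  fix a b x y assume x: "x \<in> Enc a" and y: "y \<in> Enc b"
  obtain f where f: "x = ev f" "degree f < l" "psi f = a" using x unfolding Enc_def by auto
  obtain g where g: "y = ev g" "degree g < l" "psi g = b" using y unfolding Enc_def by auto
  have "x + y = ev (f + g)" using f g by (simp add: ev_add)
  moreover have "degree (f + g) < l" using f g by (auto intro: le_less_trans[OF degree_add_le_max])
  moreover have "psi (f + g) = a + b" using f g by (simp add: psi_add)
  ultimately show "x + y \<in> Enc (a + b)" unfolding Enc_def by blast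
next
  fix c a x assume x: "x \<in> Enc a"
  obtain f where f: "x = ev f" "degree f < l" "psi f = a" using x unfolding Enc_def by auto
  have "vscale c x = ev (Polynomial.smult c f)" using f by (simp add: ev_smult)
  moreover have "degree (Polynomial.smult c f) < l" using f by (auto intro: le_less_trans[OF degree_smult_le])
  moreover have "psi (Polynomial.smult c f) = emb c * a" using f by (simp add: psi_smult)
  ultimately show "vscale c x \<in> Enc (emb c * a)" unfolding Enc_def by blast
qed

lemma mult_ok:
  assumes mn: "m * (l - 1) < n"
  shows "mult_friendly emb n m Enc"
  unfolding mult_friendly_def
proof (intro exI[of _ Dec] conjI ballI allI impI)
  fix x y :: "nat \<Rightarrow> 'a"
  show "Dec (x + y) = Dec x + Dec y" by (simp add: Dec_def interp_add psi_add)
next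
  fix c and x :: "nat \<Rightarrow> 'a"
  show "Dec (vscale c x) = emb c * Dec x" by (simp add: Dec_def interp_scale psi_smult)
next
  fix z :: "nat \<Rightarrow> 'b" and z' :: "nat \<Rightarrow> nat \<Rightarrow> 'a"
  assume zz: "\<forall>h<m. z' h \<in> Enc (z h)"
  have "\<forall>h. \<exists>f. h < m \<longrightarrow> (z' h = ev f \<and> degree f < l \<and> psi f = z h)"
    using zz unfolding Enc_def by blast
  then obtain F where F: "\<And>h. h < m \<Longrightarrow> z' h = ev (F h) \<and> degree (F h) < l \<and> psi (F h) = z h"
    by metis
  define P where "P = (\<Prod>h<m. F h)"
  have vec: "(\<lambda>i. if i < n then \<Prod>h<m. z' h i else 0) = ev P"
  proof
    fix i show "(if i < n then \<Prod>h<m. z' h i else 0) = ev P i"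
    proof (cases "i < n")
      case True
      have "(\<Prod>h<m. z' h i) = (\<Prod>h<m. poly (F h) (pts i))"
        by (rule prod.cong) (use F True in \<open>auto simp: ev_def\<close>)
      then show ?thesis using True by (simp add: ev_def P_def poly_prod)
    qed (simp add: ev_def)
  qed
  have "degree P \<le> sum (degree \<circ> F) {..<m}" unfolding P_def by (rule degree_prod_sum_le) simp
  also have "\<dots> \<le> of_nat (card {..<m}) * (l - 1)"
    by (rule sum_bounded_above) (use F in \<open>fastforce\<close>)
  also have "\<dots> = m * (l - 1)" by simp
  finally have "degree P < n" using mn by linarith
  then have "Dec (ev P) = psi P" by (simp add: Dec_def interp_ev)
  also have "\<dots> = (\<Prod>h<m. z h)" unfolding P_def psi_prod by (rule prod.cong) (use F in auto)
  finally show "(\<Prod>h<m. z h) = Dec (\<lambda>i. if i < n then \<Prod>h<m. z' h i else 0)" using vec by simp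
qed

end

theorem lemmaA1:
  fixes emb :: "'a::{field,finite} \<Rightarrow> 'b::{field,finite}"
    and k r l m :: nat
  assumes "field_emb emb"
    and "CARD('b) = CARD('a) ^ k"
    and "k \<le> r" and "r \<le> l" and "2 * l \<le> CARD('a)"
    and "m * (k - 1) < r"
    and "m * (l - 1) < CARD('a) - r"
  shows "\<exists>QX QZ (Enc :: 'b \<Rightarrow> (nat \<Rightarrow> 'a) set).
           is_css (CARD('a) - r) QX QZ \<and>
           css_dim (CARD('a) - r) QX QZ = k \<and>
           css_dist (CARD('a) - r) QX QZ \<ge> l + 1 - r \<and>
           is_enc_Z emb (CARD('a) - r) QX QZ Enc \<and>
           mult_friendly emb (CARD('a) - r) m Enc"
proof -
  note e = assms(1)
  define q where "q = CARD('a)"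
  define n where "n = q - r"
  have k1: "1 \<le> k"
  proof (rule ccontr)
    assume "\<not> 1 \<le> k" then have "k = 0" by simp
    then have "CARD('b) = 1" using assms(2) by simp
    moreover have "card {0::'b, 1} \<le> CARD('b)" by (rule card_mono) auto
    ultimately show False by simp
  qed
  obtain th :: 'b where gen: "\<forall>x. x \<noteq> 0 \<longrightarrow> (\<exists>j::nat. x = th ^ j)"
    using exists_generator by blast
  have VU: "Vd emb th k = UNIV" by (rule Vd_full[OF e gen assms(2)])
  define astar where "astar = (SOME a. emb a = th)"
  have astar: "emb a = th \<Longrightarrow> a = astar" for a
  proof -
    assume a: "emb a = th"
    then have "emb astar = th" unfolding astar_def by (rule someI)
    then show "a = astar" using a emb_inj[OF e] by metis
  qed
  define M where "M = (UNIV :: 'a set) - {astar}"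
  have cM: "card M = q - 1" unfolding M_def q_def by (simp add: card_Diff_singleton)
  obtain h where h: "bij_betw h {0..<card M} M" using ex_bij_betw_nat_finite[of M] by auto
  have nM: "n \<le> card M" unfolding cM n_def using assms(3) k1 by linarith
  have pinj: "inj_on h {..<n}"
    by (rule inj_on_subset[OF bij_betw_imp_inj_on[OF h]]) (use nM in auto)
  have pth: "emb (h i) \<noteq> th" if "i < n" for i
  proof
    assume "emb (h i) = th"
    then have "h i = astar" by (rule astar)
    moreover have "h i \<in> M" using bij_betw_imp_surj_on[OF h] that nM by auto
    ultimately show False unfolding M_def by simp
  qed
  have ln: "l \<le> n" unfolding n_def q_def using assms(4,5) by linarith
  interpret C: constr emb th h n l k
    by unfold_locales (use e VU pinj pth assms(3,4) ln k1 in auto)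
  have "l + 1 - r \<le> n + 1 - l" unfolding n_def q_def using assms(4,5) by linarith
  moreover have "l + 1 - r \<le> l + 1 - k" using assms(3) by linarith
  ultimately have dist: "l + 1 - r \<le> css_dist n (dual n C.Bcode) C.Acode" by (rule C.dist_ok)
  show ?thesis
    unfolding n_def[symmetric] q_def[symmetric]
    using C.css_ok C.dim_ok[OF assms(2)] dist C.enc_ok C.mult_ok[of m] assms(7)
    unfolding n_def q_def by blast
qed


end
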